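(* Let $G$ be a graph on $[n]$ whose connected components are $C_1,\dots,C_k$, and suppose that for all $i\neq j$ no edge of $C_i$ crosses an edge of $C_j$. Then $NC_G\cong NC_{C_1}\times NC_{C_2}\times\cdots\times NC_{C_k}$.
   Context: Graphs are finite simple graphs whose vertices are distinct positive integers; edges are written $ij$ with $i<j$. Two edges $a_1a_2$ and $b_1b_2$ cross if $a_1<b_1<a_2<b_2$ or $b_1<a_1<b_2<a_2$. A spanning subgraph is identified with its edge set. A bond of a graph $X$ is a spanning subgraph of $X$ each of whose connected components is an induced subgraph of $X$. A set partition of the vertex set is crossing if there are distinct blocks $B,B'$ and $a,c\in B$, $b,d\in B'$ with $a<b<c<d$, noncrossing otherwise; a bond is noncrossing if the partition of the vertex set into vertex sets of its connected components is noncrossing. $NC_X$ denotes the poset of noncrossing bonds of $X$ ordered by inclusion of edge sets. *)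

theory Defs
  imports Main "HOL-Library.FuncSet"
begin

text \<open>A graph is a pair (V, E): V a finite set of positive integers, E a set of
edges (i,j) with i < j.  Spanning subgraphs are identified with edge sets.\<close>

type_synonym graph = "nat set \<times> (nat \<times> nat) set"

definition crosses :: "nat \<times> nat \<Rightarrow> nat \<times> nat \<Rightarrow> bool" where
  "crosses e f \<longleftrightarrow>
     (fst e < fst f \<and> fst f < snd e \<and> snd e < snd f) \<or>
     (fst f < fst e \<and> fst e < snd f \<and> snd f < snd e)"

definition adj :: "(nat \<times> nat) set \<Rightarrow> nat \<Rightarrow> nat \<Rightarrow> bool" where
  "adj F x y \<longleftrightarrow> (x, y) \<in> F \<or> (y, x) \<in> F"

definition comp_sets :: "nat set \<Rightarrow> (nat \<times> nat) set \<Rightarrow> nat set set" where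
  "comp_sets V F = (\<lambda>x. {y \<in> V. (adj F)\<^sup>*\<^sup>* x y}) ` V"

definition induced :: "(nat \<times> nat) set \<Rightarrow> nat set \<Rightarrow> (nat \<times> nat) set" where
  "induced E S = {e \<in> E. fst e \<in> S \<and> snd e \<in> S}"

definition bond :: "graph \<Rightarrow> (nat \<times> nat) set \<Rightarrow> bool" where
  "bond X F \<longleftrightarrow> F \<subseteq> snd X \<and>
     (\<forall>S \<in> comp_sets (fst X) F. induced F S = induced (snd X) S)"

definition noncrossing_partition :: "nat set set \<Rightarrow> bool" where
  "noncrossing_partition P \<longleftrightarrow>
     \<not> (\<exists>B \<in> P. \<exists>B' \<in> P. B \<noteq> B' \<and>
          (\<exists>a b c d. a \<in> B \<and> c \<in> B \<and> b \<in> B' \<and> d \<in> B' \<and> a < b \<and> b < c \<and> c < d))"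

text \<open>The underlying set of the poset NC_X (ordered by inclusion).\<close>
definition NC :: "graph \<Rightarrow> (nat \<times> nat) set set" where
  "NC X = {F. bond X F \<and> noncrossing_partition (comp_sets (fst X) F)}"

definition components :: "graph \<Rightarrow> graph set" where
  "components X = (\<lambda>S. (S, induced (snd X) S)) ` comp_sets (fst X) (snd X)"

end

theory Submission
  imports Defs
begin

definition cls :: "nat set \<Rightarrow> (nat \<times> nat) set \<Rightarrow> nat \<Rightarrow> nat set" where
  "cls V F x = {y \<in> V. (adj F)\<^sup>*\<^sup>* x y}"

definition edgesin :: "nat set \<Rightarrow> (nat \<times> nat) set \<Rightarrow> bool" where
  "edgesin V F \<longleftrightarrow> (\<forall>e\<in>F. fst e \<in> V \<and> snd e \<in> V)"

lemma adj_sym: "adj F x y = adj F y x" unfolding adj_def by auto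

lemma rt_sym: "(adj F)\<^sup>*\<^sup>* x y \<Longrightarrow> (adj F)\<^sup>*\<^sup>* y x"
proof (induction rule: rtranclp_induct)
  case base then show ?case by simp
next
  case (step y z)
  have "adj F z y" using step(2) adj_sym by metis
  then show ?case using step(3) by (rule converse_rtranclp_into_rtranclp)
qed

lemma comp_sets_cls: "comp_sets V F = cls V F ` V"
  unfolding comp_sets_def cls_def by simp

lemma cls_eq: "y \<in> cls V F x \<Longrightarrow> cls V F y = cls V F x"
  unfolding cls_def by (auto intro: rtranclp_trans rt_sym)

lemma cls_self: "x \<in> V \<Longrightarrow> x \<in> cls V F x"
  unfolding cls_def by auto

lemma cls_subV: "cls V F x \<subseteq> V"
  unfolding cls_def by auto

lemma comp_mem: "S \<in> comp_sets V F \<Longrightarrow> x \<in> S \<Longrightarrow> S = cls V F x"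
  unfolding comp_sets_cls using cls_eq by blast

lemma comp_disj: "S \<in> comp_sets V F \<Longrightarrow> S' \<in> comp_sets V F \<Longrightarrow> x \<in> S \<Longrightarrow> x \<in> S' \<Longrightarrow> S = S'"
  using comp_mem by metis

lemma comp_subV: "S \<in> comp_sets V F \<Longrightarrow> S \<subseteq> V"
  unfolding comp_sets_cls using cls_subV by blast

lemma adj_in: "edgesin V F \<Longrightarrow> adj F x y \<Longrightarrow> x \<in> V \<and> y \<in> V"
  unfolding edgesin_def adj_def by force

lemma induced_induced: "T \<subseteq> S \<Longrightarrow> induced (induced F S) T = induced F T"
  unfolding induced_def by auto

lemma adj_induced_le: "adj (induced F S) \<le> adj F"
  unfolding adj_def induced_def by auto

context
  fixes V :: "nat set" and E F :: "(nat \<times> nat) set" and S :: "nat set"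
  assumes eV: "edgesin V E" and FE: "F \<subseteq> E" and SC: "S \<in> comp_sets V E"
begin

lemma restr_path: assumes xS: "x \<in> S" shows "(adj F)\<^sup>*\<^sup>* x y \<Longrightarrow> (adj (induced F S))\<^sup>*\<^sup>* x y \<and> y \<in> S"
proof (induction rule: rtranclp_induct)
  case base
  then show ?case using xS by simp
next
  case (step y z)
  then have yS: "y \<in> S" and r: "(adj (induced F S))\<^sup>*\<^sup>* x y" by auto
  have aE: "adj E y z" using step(2) FE unfolding adj_def by auto
  have zV: "z \<in> V" using adj_in[OF eV aE] by simp
  have "S = cls V E y" using comp_mem[OF SC yS] .
  then have zS: "z \<in> S" using zV aE unfolding cls_def by auto
  have "adj (induced F S) y z" using step(2) yS zS unfolding adj_def induced_def by auto
  then show ?case using r zS by (auto intro: rtranclp.rtrancl_into_rtrancl)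
qed

lemma cls_restr: "x \<in> S \<Longrightarrow> cls S (induced F S) x = cls V F x"
proof
  assume xS: "x \<in> S"
  show "cls S (induced F S) x \<subseteq> cls V F x"
    using comp_subV[OF SC] rtranclp_mono[OF adj_induced_le, of F S]
    unfolding cls_def by blast
  show "cls V F x \<subseteq> cls S (induced F S) x"
    using restr_path[OF xS] unfolding cls_def by blast
qed

lemma comp_restr: "comp_sets S (induced F S) = cls V F ` S"
  unfolding comp_sets_cls using cls_restr by simp

lemma cls_sub: "x \<in> S \<Longrightarrow> cls V F x \<subseteq> S"
  using restr_path unfolding cls_def by blast

end

lemma nc_E: "noncrossing_partition P \<Longrightarrow> B \<in> P \<Longrightarrow> B' \<in> P \<Longrightarrow> B \<noteq> B' \<Longrightarrow>
  a \<in> B \<Longrightarrow> c \<in> B \<Longrightarrow> b \<in> B' \<Longrightarrow> d \<in> B' \<Longrightarrow> a < b \<Longrightarrow> b < c \<Longrightarrow> c < d \<Longrightarrow> False"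
  unfolding noncrossing_partition_def by (meson)

lemma nc_mono: assumes "noncrossing_partition P" "Q \<subseteq> P" shows "noncrossing_partition Q"
  unfolding noncrossing_partition_def
proof (rule notI, elim bexE exE conjE)
  fix B B' a b c d
  assume "B \<in> Q" "B' \<in> Q" "B \<noteq> B'" "a \<in> B" "c \<in> B" "b \<in> B'" "d \<in> B'" "a < b" "b < c" "c < d"
  then show False using nc_E[OF assms(1)] assms(2) by (meson subsetD)
qed

context
  fixes V :: "nat set" and E :: "(nat \<times> nat) set"
  assumes eV: "edgesin V E" and lt: "\<forall>e\<in>E. fst e < snd e"
    and nc: "\<forall>S\<in>comp_sets V E. \<forall>S'\<in>comp_sets V E. S \<noteq> S' \<longrightarrow>
              (\<forall>e\<in>induced E S. \<forall>f\<in>induced E S'. \<not> crosses e f)"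
begin

lemma geo1:
  assumes SC: "S \<in> comp_sets V E" and aS: "a \<in> S" and ab: "a < b" and bS: "b \<notin> S"
    and cS: "c \<in> S" and bc: "b < c"
  shows "\<exists>e\<in>induced E S. fst e < b \<and> b < snd e"
proof -
  have Sa: "S = cls V E a" using comp_mem[OF SC aS] .
  have "(adj E)\<^sup>*\<^sup>* a c" using cS Sa unfolding cls_def by auto
  moreover have "(adj E)\<^sup>*\<^sup>* a y \<Longrightarrow> b < y \<Longrightarrow> \<exists>e\<in>induced E S. fst e < b \<and> b < snd e" for y
  proof (induction rule: rtranclp_induct)
    case base
    then show ?case using ab by simp
  next
    case (step y z)
    have yV: "y \<in> V" and zV: "z \<in> V" using adj_in[OF eV step(2)] by auto
    have yS: "y \<in> S" using yV step(1) Sa unfolding cls_def by auto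
    have zS: "z \<in> S" using zV step(1,2) Sa unfolding cls_def
      by (auto intro: rtranclp.rtrancl_into_rtrancl)
    show ?case
    proof (cases "b < y")
      case True then show ?thesis using step by auto
    next
      case False
      then have yb: "y < b" using yS bS by (cases "y = b") auto
      have "(y, z) \<in> E \<or> (z, y) \<in> E" using step(2) unfolding adj_def by auto
      then have "(y, z) \<in> E" using lt yb step(4) by force
      then have "(y, z) \<in> induced E S" using yS zS unfolding induced_def by auto
      then show ?thesis using yb step(4) by force
    qed
  qed
  ultimately show ?thesis using bc by blast
qed

lemma geo2:
  assumes SC: "S \<in> comp_sets V E" and SC': "S' \<in> comp_sets V E" and ne: "S \<noteq> S'"
    and xy: "(x, y) \<in> induced E S" and wS: "w \<in> S'" and xw: "x < w" and wy: "w < y"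
    and zS: "z \<in> S'"
  shows "x < z \<and> z < y"
proof -
  have Sw: "S' = cls V E w" using comp_mem[OF SC' wS] .
  have xS: "x \<in> S" and yS: "y \<in> S" and xyE: "(x,y) \<in> E" using xy unfolding induced_def by auto
  have "(adj E)\<^sup>*\<^sup>* w z" using zS Sw unfolding cls_def by auto
  then show ?thesis
  proof (induction rule: rtranclp_induct)
    case base
    then show ?case using xw wy by simp
  next
    case (step z z')
    have zV: "z \<in> V" and zV': "z' \<in> V" using adj_in[OF eV step(2)] by auto
    have zS: "z \<in> S'" using zV step(1) Sw unfolding cls_def by auto
    have zS': "z' \<in> S'" using zV' step(1,2) Sw unfolding cls_def
      by (auto intro: rtranclp.rtrancl_into_rtrancl)
    have "z' \<noteq> x" "z' \<noteq> y" using zS' xS yS comp_disj[OF SC SC'] ne by auto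
    show ?case
    proof (rule ccontr)
      assume "\<not> (x < z' \<and> z' < y)"
      then have out: "z' < x \<or> y < z'" using \<open>z' \<noteq> x\<close> \<open>z' \<noteq> y\<close> by auto
      have "(z, z') \<in> E \<or> (z', z) \<in> E" using step(2) unfolding adj_def by auto
      then obtain f where fE: "f \<in> induced E S'" and
        f: "f = (z, z') \<or> f = (z', z)" using zS zS' unfolding induced_def by auto
      have fl: "fst f < snd f" using fE lt unfolding induced_def by auto
      have "crosses (x, y) f"
        using f
      proof
        assume f1: "f = (z, z')"
        then have "z < z'" using fl by simp
        then have "y < z'" using out step(3) by auto
        then show ?thesis using f1 step(3) unfolding crosses_def by simp
      next
        assume f1: "f = (z', z)"
        then have "z' < z" using fl by simp
        then have "z' < x" using out step(3) by auto
        then show ?thesis using f1 step(3) unfolding crosses_def by simp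
      qed
      moreover have "\<forall>e\<in>induced E S. \<forall>f\<in>induced E S'. \<not> crosses e f"
        using nc SC SC' ne by blast
      ultimately show False using xy fE by blast
    qed
  qed
qed

lemma geo:
  assumes SC: "S \<in> comp_sets V E" and SC': "S' \<in> comp_sets V E" and ne: "S \<noteq> S'"
    and aS: "a \<in> S" and cS: "c \<in> S" and bS: "b \<in> S'" and dS: "d \<in> S'"
    and abcd: "a < b" "b < c" "c < d"
  shows False
proof -
  have bnS: "b \<notin> S" and cnS: "c \<notin> S'" using comp_disj[OF SC SC'] ne bS cS by auto
  obtain e where e: "e \<in> induced E S" "fst e < b" "b < snd e"
    using geo1[OF SC aS abcd(1) bnS cS abcd(2)] by blast
  obtain f where f: "f \<in> induced E S'" "fst f < c" "c < snd f"
    using geo1[OF SC' bS abcd(2) cnS dS abcd(3)] by blast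
  have fe: "fst e \<in> S" using e unfolding induced_def by auto
  have ff: "fst f \<in> S'" using f unfolding induced_def by auto
  have "fst e < fst f"
    using geo2[OF SC SC' ne _ bS e(2) e(3) ff] e(1) by (cases e) auto
  moreover have "fst f < fst e"
    using geo2[OF SC' SC ne[symmetric] _ cS f(2) f(3) fe] f(1) by (cases f) auto
  ultimately show False by simp
qed

lemma key:
  assumes FE: "F \<subseteq> E"
  shows "F \<in> NC (V, E) \<longleftrightarrow> (\<forall>S\<in>comp_sets V E. induced F S \<in> NC (S, induced E S))"
proof -
  let ?CS = "comp_sets V E"
  have Vun: "V = \<Union> ?CS" unfolding comp_sets_cls using cls_self cls_subV by blast
  have bondG: "bond (V, E) F \<longleftrightarrow> (\<forall>x\<in>V. induced F (cls V F x) = induced E (cls V F x))"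
    unfolding bond_def comp_sets_cls using FE by auto
  have bondS: "bond (S, induced E S) (induced F S) \<longleftrightarrow>
      (\<forall>x\<in>S. induced F (cls V F x) = induced E (cls V F x))" if SC: "S \<in> ?CS" for S
  proof -
    have sub: "induced F S \<subseteq> induced E S" using FE unfolding induced_def by auto
    have "bond (S, induced E S) (induced F S) \<longleftrightarrow>
      (\<forall>x\<in>S. induced (induced F S) (cls V F x) = induced (induced E S) (cls V F x))"
      unfolding bond_def fst_conv snd_conv comp_restr[OF eV FE SC] using sub by simp
    also have "\<dots> \<longleftrightarrow> (\<forall>x\<in>S. induced F (cls V F x) = induced E (cls V F x))"
      using induced_induced[OF cls_sub[OF eV FE SC]] by simp
    finally show ?thesis .
  qed
  have ncS: "noncrossing_partition (comp_sets S (induced F S)) \<longleftrightarrow>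
      noncrossing_partition (cls V F ` S)" if SC: "S \<in> ?CS" for S
    using comp_restr[OF eV FE SC] by simp
  have nc_iff: "noncrossing_partition (cls V F ` V) \<longleftrightarrow> (\<forall>S\<in>?CS. noncrossing_partition (cls V F ` S))"
  proof
    assume "noncrossing_partition (cls V F ` V)"
    then show "\<forall>S\<in>?CS. noncrossing_partition (cls V F ` S)"
      using comp_subV nc_mono by (meson image_mono)
  next
    assume H: "\<forall>S\<in>?CS. noncrossing_partition (cls V F ` S)"
    show "noncrossing_partition (cls V F ` V)"
      unfolding noncrossing_partition_def
    proof (rule notI, elim bexE exE conjE)
      fix B B' a b c d
      assume B: "B \<in> cls V F ` V" and B': "B' \<in> cls V F ` V" and ne: "B \<noteq> B'"
        and a: "a \<in> B" and c: "c \<in> B" and b: "b \<in> B'" and d: "d \<in> B'"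
        and abcd: "a < b" "b < c" "c < d"
      obtain x where x: "x \<in> V" "B = cls V F x" using B by blast
      obtain x' where x': "x' \<in> V" "B' = cls V F x'" using B' by blast
      define S where "S = cls V E x"
      define S' where "S' = cls V E x'"
      have SC: "S \<in> ?CS" and SC': "S' \<in> ?CS" unfolding S_def S'_def comp_sets_cls using x x' by auto
      have xS: "x \<in> S" and xS': "x' \<in> S'" unfolding S_def S'_def using x x' cls_self by auto
      show False
      proof (cases "S = S'")
        case True
        then have "B \<in> cls V F ` S" "B' \<in> cls V F ` S" using x x' xS xS' by auto
        moreover have "noncrossing_partition (cls V F ` S)" using H SC by blast
        ultimately show False using nc_E ne a b c d abcd by metis
      next
        case False
        have "B \<subseteq> S" using cls_sub[OF eV FE SC xS] x by simp
        moreover have "B' \<subseteq> S'" using cls_sub[OF eV FE SC' xS'] x' by simp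
        ultimately show False using geo[OF SC SC' False, of a c b d] a b c d abcd by auto
      qed
    qed
  qed
  have allV: "(\<forall>x\<in>V. P x) \<longleftrightarrow> (\<forall>S\<in>?CS. \<forall>x\<in>S. P x)" for P
    using Vun by blast
  have "F \<in> NC (V, E) \<longleftrightarrow> bond (V, E) F \<and> noncrossing_partition (cls V F ` V)"
    unfolding NC_def using comp_sets_cls[of V F] by simp
  also have "\<dots> \<longleftrightarrow> (\<forall>S\<in>?CS. bond (S, induced E S) (induced F S)) \<and>
      (\<forall>S\<in>?CS. noncrossing_partition (comp_sets S (induced F S)))"
    using bondG bondS ncS nc_iff allV by simp
  also have "\<dots> \<longleftrightarrow> (\<forall>S\<in>?CS. induced F S \<in> NC (S, induced E S))"
    unfolding NC_def by auto
  finally show ?thesis .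
qed

end

lemma edge_comp:
  assumes eV: "edgesin V E" and e: "e \<in> E"
  shows "\<exists>S\<in>comp_sets V E. e \<in> induced E S"
proof -
  obtain x y where xy: "e = (x, y)" by (cases e)
  have xV: "x \<in> V" and yV: "y \<in> V" using eV e xy unfolding edgesin_def by auto
  have "adj E x y" using e xy unfolding adj_def by auto
  then have "y \<in> cls V E x" using yV unfolding cls_def by auto
  moreover have "x \<in> cls V E x" using xV by (rule cls_self)
  ultimately have "e \<in> induced E (cls V E x)" using e xy unfolding induced_def by auto
  moreover have "cls V E x \<in> comp_sets V E" using xV unfolding comp_sets_cls by auto
  ultimately show ?thesis by blast
qed

lemma edge_comp_uniq:
  assumes "S \<in> comp_sets V E" "S' \<in> comp_sets V E" "e \<in> induced F S" "e \<in> induced F' S'"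
  shows "S = S'"
  using assms comp_disj unfolding induced_def by blast

lemma union_induced:
  assumes eV: "edgesin V E" and FE: "F \<subseteq> E"
  shows "F = (\<Union>S\<in>comp_sets V E. induced F S)"
proof
  show "F \<subseteq> (\<Union>S\<in>comp_sets V E. induced F S)"
  proof
    fix e assume eF: "e \<in> F"
    then obtain S where "S \<in> comp_sets V E" "e \<in> induced E S" using edge_comp[OF eV] FE by blast
    then show "e \<in> (\<Union>S\<in>comp_sets V E. induced F S)" using eF unfolding induced_def by auto
  qed
  show "(\<Union>S\<in>comp_sets V E. induced F S) \<subseteq> F" unfolding induced_def by auto
qed

theorem lemma2p9:
  fixes n :: nat and E :: "(nat \<times> nat) set"
  assumes edges: "\<forall>e \<in> E. fst e < snd e \<and> fst e \<in> {1..n} \<and> snd e \<in> {1..n}"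
    and no_cross: "\<forall>C \<in> components ({1..n}, E). \<forall>D \<in> components ({1..n}, E).
                     C \<noteq> D \<longrightarrow> (\<forall>e \<in> snd C. \<forall>f \<in> snd D. \<not> crosses e f)"
  shows "\<exists>\<phi>. bij_betw \<phi> (NC ({1..n}, E)) (\<Pi>\<^sub>E C \<in> components ({1..n}, E). NC C) \<and>
             (\<forall>F \<in> NC ({1..n}, E). \<forall>F' \<in> NC ({1..n}, E).
                F \<subseteq> F' \<longleftrightarrow> (\<forall>C \<in> components ({1..n}, E). \<phi> F C \<subseteq> \<phi> F' C))"
proof -
  define V :: "nat set" where "V = {1..n}"
  let ?CS = "comp_sets V E"
  let ?Comps = "components (V, E)"
  have Comps: "?Comps = (\<lambda>S. (S, induced E S)) ` ?CS" unfolding components_def by simp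
  have eV: "edgesin V E" using edges unfolding edgesin_def V_def by auto
  have lt: "\<forall>e\<in>E. fst e < snd e" using edges by auto
  have nc: "\<forall>S\<in>?CS. \<forall>S'\<in>?CS. S \<noteq> S' \<longrightarrow>
              (\<forall>e\<in>induced E S. \<forall>f\<in>induced E S'. \<not> crosses e f)"
  proof (intro ballI impI)
    fix S S' e f assume "S \<in> ?CS" "S' \<in> ?CS" "S \<noteq> S'" "e \<in> induced E S" "f \<in> induced E S'"
    moreover have "(S, induced E S) \<in> components ({1..n}, E)" "(S', induced E S') \<in> components ({1..n}, E)"
      using calculation Comps V_def by auto
    ultimately show "\<not> crosses e f" using no_cross by fastforce
  qed
  note key = key[OF eV lt nc]
  have NCsub: "F \<in> NC (V, E) \<Longrightarrow> F \<subseteq> E" for F unfolding NC_def bond_def by auto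
  have NCCsub: "G \<in> NC (S, induced E S) \<Longrightarrow> G \<subseteq> induced E S" for G S unfolding NC_def bond_def by auto
  define \<phi> where "\<phi> F = restrict (\<lambda>C. induced F (fst C)) ?Comps" for F
  define \<psi> where "\<psi> g = (\<Union>C\<in>?Comps. g C)" for g :: "nat set \<times> (nat \<times> nat) set \<Rightarrow> (nat \<times> nat) set"
  have psi_phi: "\<psi> (\<phi> F) = F" if "F \<in> NC (V, E)" for F
  proof -
    have "\<psi> (\<phi> F) = (\<Union>S\<in>?CS. induced F S)" unfolding \<psi>_def \<phi>_def Comps by auto
    then show ?thesis using union_induced[OF eV NCsub[OF that]] by simp
  qed
  have ind_psi: "induced (\<psi> g) S = g (S, induced E S)"
    if g: "g \<in> (\<Pi>\<^sub>E C \<in> ?Comps. NC C)" and SC: "S \<in> ?CS" for g S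
  proof
    have gsub: "g (S', induced E S') \<subseteq> induced E S'" if "S' \<in> ?CS" for S'
      using g that NCCsub unfolding Comps by (auto simp: PiE_iff)
    show "induced (\<psi> g) S \<subseteq> g (S, induced E S)"
    proof
      fix e assume e: "e \<in> induced (\<psi> g) S"
      then obtain S' where S': "S' \<in> ?CS" "e \<in> g (S', induced E S')"
        unfolding \<psi>_def Comps induced_def by auto
      have "e \<in> induced E S'" using gsub S' by auto
      then have "S' = S" using edge_comp_uniq[OF S'(1) SC] e by blast
      then show "e \<in> g (S, induced E S)" using S' by simp
    qed
    show "g (S, induced E S) \<subseteq> induced (\<psi> g) S"
      using gsub[OF SC] SC unfolding \<psi>_def Comps induced_def by auto
  qed
  have phi_psi: "\<phi> (\<psi> g) = g" if g: "g \<in> (\<Pi>\<^sub>E C \<in> ?Comps. NC C)" for g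
  proof
    fix C show "\<phi> (\<psi> g) C = g C"
    proof (cases "C \<in> ?Comps")
      case True
      then obtain S where S: "S \<in> ?CS" "C = (S, induced E S)" unfolding Comps by auto
      then show ?thesis unfolding \<phi>_def using True ind_psi[OF g S(1)] by simp
    next
      case False
      have "g C = undefined" using g False unfolding PiE_def extensional_def by blast
      then show ?thesis unfolding \<phi>_def using False by simp
    qed
  qed
  have phi_in: "\<phi> F \<in> (\<Pi>\<^sub>E C \<in> ?Comps. NC C)" if F: "F \<in> NC (V, E)" for F
  proof -
    have "\<forall>S\<in>?CS. induced F S \<in> NC (S, induced E S)" using key[OF NCsub[OF F]] F by blast
    then show ?thesis unfolding \<phi>_def Comps by (auto simp: PiE_iff)
  qed
  have psi_in: "\<psi> g \<in> NC (V, E)" if g: "g \<in> (\<Pi>\<^sub>E C \<in> ?Comps. NC C)" for g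
  proof -
    have sub: "\<psi> g \<subseteq> E"
      using g NCCsub unfolding \<psi>_def Comps induced_def by (fastforce simp: PiE_iff)
    have "\<forall>S\<in>?CS. induced (\<psi> g) S \<in> NC (S, induced E S)"
      using ind_psi[OF g] g unfolding Comps by (auto simp: PiE_iff)
    then show ?thesis using key[OF sub] by blast
  qed
  have bij: "bij_betw \<phi> (NC (V, E)) (\<Pi>\<^sub>E C \<in> ?Comps. NC C)"
  proof (rule bij_betw_byWitness[where f' = \<psi>])
    show "\<forall>a\<in>NC (V, E). \<psi> (\<phi> a) = a" using psi_phi by blast
    show "\<forall>a'\<in>(\<Pi>\<^sub>E C \<in> ?Comps. NC C). \<phi> (\<psi> a') = a'" using phi_psi by blast
    show "\<phi> ` NC (V, E) \<subseteq> (\<Pi>\<^sub>E C \<in> ?Comps. NC C)" using phi_in by blast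
    show "\<psi> ` (\<Pi>\<^sub>E C \<in> ?Comps. NC C) \<subseteq> NC (V, E)" using psi_in by blast
  qed
  have ord: "F \<subseteq> F' \<longleftrightarrow> (\<forall>C \<in> ?Comps. \<phi> F C \<subseteq> \<phi> F' C)"
    if F: "F \<in> NC (V, E)" and F': "F' \<in> NC (V, E)" for F F'
  proof
    assume "F \<subseteq> F'"
    then show "\<forall>C \<in> ?Comps. \<phi> F C \<subseteq> \<phi> F' C" unfolding \<phi>_def induced_def by auto
  next
    assume H: "\<forall>C \<in> ?Comps. \<phi> F C \<subseteq> \<phi> F' C"
    have "\<forall>S\<in>?CS. induced F S \<subseteq> induced F' S"
      using H unfolding \<phi>_def Comps by auto
    then show "F \<subseteq> F'"
      using union_induced[OF eV NCsub[OF F]] union_induced[OF eV NCsub[OF F']] by blast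
  qed
  show ?thesis using bij ord unfolding V_def by blast
qed

end
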